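(* Let $n=2$, $D(x_0,x_1,x_2;p)=\sum_{k=0}^2\binom{2}{k}p^k(1-p)^{2-k}|p-x_k|$, let $\Omega$ be the set of Borel probability measures on $[0,1]$ and $E(\sigma_0,\sigma_1,\sigma_2;\mu)=\iiiint D(x_0,x_1,x_2;p)\,d\sigma_0(x_0)d\sigma_1(x_1)d\sigma_2(x_2)d\mu(p)$. Let $$p_1=\tfrac13\Big(1+\sqrt[3]{1+3\sqrt{57}}-\tfrac{8}{\sqrt[3]{1+3\sqrt{57}}}\Big)\approx0.3611,$$ the unique real root of $x^3-x^2+3x-1$, and set $p_0=0$, $p_2=1-p_1$, $p_3=1$, $$m_1=m_2=\frac{0.5}{p_1^2+(1-p_1)^2+1}\approx0.325,\qquad m_0=m_3=0.5-m_1\approx0.175,$$ $\mu=\sum_{i=0}^3m_i\delta_{p_i}$, and $$a_0=\frac{2p_1(1-p_1)^2}{p_1^2+(1-p_1)^2+1}\approx0.1916,\qquad a_1=0.5,\qquad a_2=1-a_0.$$ Then the strategy pair $(\delta_{a_0},\delta_{a_1},\delta_{a_2};\mu)$ is a Nash equilibrium, i.e. for all $\sigma_0,\sigma_1,\sigma_2,\nu\in\Omega$, $$E(\delta_{a_0},\delta_{a_1},\delta_{a_2};\nu)\le E(\delta_{a_0},\delta_{a_1},\delta_{a_2};\mu)\le E(\sigma_0,\sigma_1,\sigma_2;\mu),$$ so that $\min_{\sigma}\max_{\nu}E=\max_\nu\min_\sigma E$ is attained at this pair. Moreover, this pair is unique in the following sense: if $\sigma_0,\sigma_1,\sigma_2,\nu\in\Omega$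 satisfy the Nash equilibrium (saddle point) condition above, then $\int x\,d\sigma_i(x)=a_i$ for $i=0,1,2$ and $\nu=\sum_{i=0}^3m_i\delta_{p_i}$.
   Context: $\delta_x$ denotes the unit point mass at $x$. Player II chooses distributions $\sigma_0,\sigma_1,\sigma_2$ (guesses for the coin bias after observing $0,1,2$ heads in two tosses) and Player I chooses a distribution $\nu$ for the bias $p$; Player II pays the expected absolute error $E$. *)

theory Defs
  imports "HOL-Probability.Probability"
begin

definition I01 :: "real measure" where
  "I01 = restrict_space borel {0..1}"

definition Omega :: "real measure set" where
  "Omega = {M. prob_space M \<and> sets M = sets I01}"

definition dirac :: "real \<Rightarrow> real measure" where
  "dirac x = return I01 x"

definition D :: "real \<Rightarrow> real \<Rightarrow> real \<Rightarrow> real \<Rightarrow> real" where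
  "D x0 x1 x2 p =
     (\<Sum>k\<in>{0..2::nat}. real (2 choose k) * p ^ k * (1 - p) ^ (2 - k) * \<bar>p - [x0, x1, x2] ! k\<bar>)"

definition E :: "real measure \<Rightarrow> real measure \<Rightarrow> real measure \<Rightarrow> real measure \<Rightarrow> real" where
  "E s0 s1 s2 mu =
     (LINT p|mu. LINT x2|s2. LINT x1|s1. LINT x0|s0. D x0 x1 x2 p)"

definition p1 :: real where
  "p1 = (1 + root 3 (1 + 3 * sqrt 57) - 8 / root 3 (1 + 3 * sqrt 57)) / 3"

definition pp :: "nat \<Rightarrow> real" where
  "pp i = [0, p1, 1 - p1, 1] ! i"

definition m1 :: real where
  "m1 = 0.5 / (p1\<^sup>2 + (1 - p1)\<^sup>2 + 1)"

definition mm :: "nat \<Rightarrow> real" where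
  "mm i = [0.5 - m1, m1, m1, 0.5 - m1] ! i"

definition mu :: "real measure" where
  "mu = measure_of {0..1} (sets I01)
          (\<lambda>A. ennreal (\<Sum>i\<in>{0..3::nat}. mm i * indicator A (pp i)))"

definition a0 :: real where
  "a0 = 2 * p1 * (1 - p1)\<^sup>2 / (p1\<^sup>2 + (1 - p1)\<^sup>2 + 1)"

definition saddle :: "real measure \<Rightarrow> real measure \<Rightarrow> real measure \<Rightarrow> real measure \<Rightarrow> bool" where
  "saddle s0 s1 s2 nu \<longleftrightarrow>
     (\<forall>t0\<in>Omega. \<forall>t1\<in>Omega. \<forall>t2\<in>Omega. \<forall>nu'\<in>Omega.
        E s0 s1 s2 nu' \<le> E s0 s1 s2 nu \<and> E s0 s1 s2 nu \<le> E t0 t1 t2 nu)"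

end

theory Submission
  imports Defs
begin


lemma p1_cubic: "p1^3 - p1^2 + 3 * p1 - 1 = 0"
proof -
  define ss where "ss = sqrt 57"
  define cc where "cc = root 3 (1 + 3 * ss)"
  have s2: "ss^2 = 57" unfolding ss_def by simp
  have spos: "ss > 0" unfolding ss_def by simp
  have cc3: "cc^3 = 1 + 3 * ss" unfolding cc_def by (simp add: odd_real_root_pow)
  have cpos: "cc > 0" unfolding cc_def using spos by simp
  have prod: "(1 + 3 * ss)  * (3 * ss - 1) = 512" using s2 by (simp add: algebra_simps power2_eq_square)
  define y where "y = cc - 8/cc"
  have "y^3 = cc^3 - 512/cc^3 - 24 * y" unfolding y_def using cpos
    by (simp add: field_simps power3_eq_cube power2_eq_square)
  also have "512/cc^3 = 3 * ss - 1" using cc3 prod spos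
    by (metis add_pos_pos divide_eq_eq mult.commute mult_pos_pos zero_less_numeral zero_less_one less_irrefl)
  finally have y3: "y^3 + 24 * y - 2 = 0" using cc3 by simp
  have "p1 = (1 + cc - 8/cc)/3" unfolding p1_def cc_def ss_def by simp
  then have "y = 3 * p1 - 1" unfolding y_def by simp
  then have "(3 * p1 - 1)^3 + 24 * (3 * p1 - 1) - 2 = 0" using y3 by simp
  then show ?thesis by (simp add: algebra_simps power3_eq_cube power2_eq_square)
qed

lemma p1_bounds: "0 < p1" "p1 < 1/2"
proof -
  have c: "p1^3 - p1^2 + 3 * p1 - 1 = 0" by (rule p1_cubic)
  show "0 < p1"
  proof (rule ccontr)
    assume "\<not> 0 < p1" hence "p1 \<le> 0" by simp
    have "p1 * p1^2 \<le> 0" using \<open>p1 \<le> 0\<close> by (simp add: mult_nonpos_nonneg)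
    hence "p1^3 \<le> 0" by (simp add: power2_eq_square power3_eq_cube)
    with c \<open>p1 \<le> 0\<close> zero_le_power2[of p1] show False by linarith
  qed
  show "p1 < 1/2"
  proof (rule ccontr)
    assume "\<not> p1 < 1/2" hence h: "p1 \<ge> 1/2" by simp
    have e: "p1^3 - p1^2 + 3 * p1 - 1 = p1^2 * (p1 - 1) + 3 * p1 - 1" by (simp add: algebra_simps power3_eq_cube power2_eq_square)
    show False
    proof (cases "p1 \<ge> 1")
      case True
      have "p1^2 * (p1 - 1) \<ge> 0" using True by simp
      then show False using c e True by linarith
    next
      case False
      have "p1^2 \<le> 1" using False h by (simp add: power_le_one)
      hence "p1^2 * (p1 - 1) \<ge> 1 * (p1 - 1)" using False by (intro mult_right_mono_neg) auto
      hence "p1 - 1 \<le> p1^2 * (p1 - 1)" by simp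
      hence hp: "p1 = 1/2" using c e h by linarith
      from c have "(1/2::real)^3 - (1/2)^2 + 3 * (1/2) - 1 = 0" by (simp only: hp)
      then show False by (simp add: power_divide)
    qed
  qed
qed

lemma a0_eq: "a0 = 2 * p1^2 / (1 + p1)"
proof -
  have c: "p1^3 - p1^2 + 3 * p1 - 1 = 0" by (rule p1_cubic)
  have S: "p1\<^sup>2 + (1 - p1)\<^sup>2 + 1 > 0" by (simp add: add_nonneg_pos)
  have q: "1 + p1 > 0" using p1_bounds by simp
  have "2 * p1 * (1 - p1)\<^sup>2 * (1 + p1) = 2 * p1^2 * (p1\<^sup>2 + (1 - p1)\<^sup>2 + 1)"
    using c by algebra
  then show ?thesis unfolding a0_def using S q by (simp add: field_simps)
qed

definition fa :: "real \<Rightarrow> real" where "fa p = D a0 (1/2) (1 - a0) p"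

lemma D_eq: "D x0 x1 x2 p = (1-p)^2 * \<bar>p - x0\<bar> + 2 * p * (1 - p) * \<bar>p - x1\<bar> + p^2 * \<bar>p - x2\<bar>"
  unfolding D_def by (simp add: numeral_2_eq_2)

lemma a0_bounds: "0 < a0" "a0 < p1"
proof -
  have q: "0 < p1" "p1 < 1/2" by (rule p1_bounds)+
  show "0 < a0" unfolding a0_eq using q by simp
  have "2 * p1^2 < p1 * (1 + p1)" using q by (simp add: power2_eq_square algebra_simps)
  then show "a0 < p1" unfolding a0_eq using q by (simp add: divide_less_eq)
qed

lemma fa_sym: "fa (1 - p) = fa p"
  unfolding fa_def D_eq by (simp add: algebra_simps abs_minus_commute)

lemma fa_low:
  assumes "0 \<le> p" "p \<le> a0"
  shows "fa p = a0 - 2 * a0 * p"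
proof -
  have h: "a0 < 1/2" using a0_bounds p1_bounds by simp
  have "fa p = (1-p)^2 * (a0 - p) + 2 * p * (1 - p) * (1/2 - p) + p^2 * (1 - a0 - p)"
    unfolding fa_def D_eq using assms h by (simp add: abs_if)
  also have "\<dots> = a0 - 2 * a0 * p" by (simp add: algebra_simps power2_eq_square)
  finally show ?thesis .
qed

lemma fa_mid:
  assumes "a0 \<le> p" "p \<le> 1/2"
  shows "(1 + p1) * (a0 - fa p) = 2 * (p - p1)^2 * (2 - p * (1 + p1))"
proof -
  have h: "a0 < 1/2" using a0_bounds p1_bounds by simp
  have F: "fa p = (1-p)^2 * (p - a0) + 2 * p * (1 - p) * (1/2 - p) + p^2 * (1 - a0 - p)"
    unfolding fa_def D_eq using assms h by (simp add: abs_if)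
  have A: "a0 * (1 + p1) = 2 * p1^2" using p1_bounds by (simp add: a0_eq field_simps)
  have "(1 + p1) * (a0 - fa p) = 2 * ((a0 * (1 + p1)) * p - (1-p)^2 * (p * (1 + p1) - a0 * (1 + p1)))"
    unfolding F by (simp add: algebra_simps power2_eq_square)
  also have "\<dots> = 2 * (2 * p1^2 * p - (1-p)^2 * (p * (1 + p1) - 2 * p1^2))" unfolding A ..
  also have "\<dots> = 2 * (p - p1)^2 * (2 - p * (1 + p1)) + 2 * p * (p1^3 - p1^2 + 3 * p1 - 1)"
    by (simp add: algebra_simps power2_eq_square power3_eq_cube)
  finally show ?thesis using p1_cubic by simp
qed

lemma fa_half:
  assumes "0 \<le> p" "p \<le> 1/2"
  shows "fa p \<le> a0" "fa p = a0 \<longleftrightarrow> p = 0 \<or> p = p1"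
proof -
  have "fa p \<le> a0 \<and> (fa p = a0 \<longleftrightarrow> p = 0 \<or> p = p1)"
  proof (cases "p \<le> a0")
    case True
    then show ?thesis using fa_low[OF assms(1) True] a0_bounds assms by auto
  next
    case False
    have q: "1 + p1 > 0" "2 - p * (1 + p1) > 0" using p1_bounds assms by (auto intro!: order.strict_trans1[OF mult_mono[of p "1/2" "1 + p1" "3/2"]])
    have e: "(1 + p1) * (a0 - fa p) = 2 * (p - p1)^2 * (2 - p * (1 + p1))" using fa_mid False assms by simp
    have "(1 + p1) * (a0 - fa p) \<ge> 0" unfolding e using q by simp
    hence 1: "fa p \<le> a0" using q by (simp add: zero_le_mult_iff)
    have "fa p = a0 \<longleftrightarrow> (p - p1)^2 = 0" using e q by auto
    then show ?thesis using 1 False a0_bounds by auto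
  qed
  then show "fa p \<le> a0" "fa p = a0 \<longleftrightarrow> p = 0 \<or> p = p1" by auto
qed

lemma fa_le: "0 \<le> p \<Longrightarrow> p \<le> 1 \<Longrightarrow> fa p \<le> a0"
  using fa_half(1)[of p] fa_half(1)[of "1-p"] fa_sym[of p] by (cases "p \<le> 1/2") auto

lemma fa_eq: "0 \<le> p \<Longrightarrow> p \<le> 1 \<Longrightarrow> fa p = a0 \<longleftrightarrow> p = 0 \<or> p = p1 \<or> p = 1 - p1 \<or> p = 1"
  using fa_half(2)[of p] fa_half(2)[of "1-p"] fa_sym[of p] p1_bounds by (cases "p \<le> 1/2") auto



lemma space_I01: "space I01 = {0..1}" unfolding I01_def by (simp add: space_restrict_space)

lemma Omega_D:
  assumes "t \<in> Omega"
  shows "prob_space t" "sets t = sets I01" "space t = {0..1}"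
  using assms unfolding Omega_def by (auto dest: sets_eq_imp_space_eq simp: space_I01)

lemma Omega_meas:
  assumes "t \<in> Omega" "f \<in> borel_measurable borel"
  shows "f \<in> borel_measurable t"
proof -
  have "f \<in> borel_measurable I01" unfolding I01_def by (rule measurable_restrict_space1[OF assms(2)])
  then show ?thesis by (subst measurable_cong_sets[OF Omega_D(2)[OF assms(1)] refl])
qed

lemma Omega_int:
  fixes f :: "real \<Rightarrow> real" and B :: real
  assumes "t \<in> Omega" "f \<in> borel_measurable borel" "\<And>x. x \<in> {0..1} \<Longrightarrow> \<bar>f x\<bar> \<le> B"
  shows "integrable t f"
proof -
  interpret prob_space t by (rule Omega_D[OF assms(1)])
  show ?thesis
    by (rule integrable_const_bound[where B=B]) (auto simp: Omega_D(3)[OF assms(1)] assms Omega_meas)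
qed

lemma dirac_Omega: "x \<in> {0..1} \<Longrightarrow> dirac x \<in> Omega"
  unfolding Omega_def dirac_def by (auto intro!: prob_space_return simp: space_I01)

lemma int_dirac:
  fixes f :: "real \<Rightarrow> real"
  assumes "x \<in> {0..1}" "f \<in> borel_measurable borel"
  shows "(LINT y|dirac x. f y) = f x"
proof -
  have "f \<in> borel_measurable I01" unfolding I01_def by (rule measurable_restrict_space1[OF assms(2)])
  then show ?thesis unfolding dirac_def using integral_return[of x I01 f] assms(1) by (simp add: space_I01)
qed

definition J :: "real measure \<Rightarrow> real \<Rightarrow> real" where "J t p = (LINT x|t. \<bar>p - x\<bar>)"
definition mean :: "real measure \<Rightarrow> real" where "mean t = (LINT x|t. x)"

lemma int_abs: "t \<in> Omega \<Longrightarrow> integrable t (\<lambda>x. \<bar>p - x\<bar>)"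
  by (rule Omega_int[where B="\<bar>p\<bar> + 1"]) auto

lemma int_id: "t \<in> Omega \<Longrightarrow> integrable t (\<lambda>x. x)"
  by (rule Omega_int[where B="1"]) auto

lemma int_lin:
  assumes "t \<in> Omega"
  shows "(LINT x|t. c * \<bar>p - x\<bar> + d) = c * J t p + d"
proof -
  interpret prob_space t by (rule Omega_D[OF assms(1)])
  show ?thesis unfolding J_def
    using int_abs[OF assms] by (simp add: integral_add prob_space)
qed

definition FF :: "real measure \<Rightarrow> real measure \<Rightarrow> real measure \<Rightarrow> real \<Rightarrow> real" where
  "FF t0 t1 t2 p = (1-p)^2 * J t0 p + 2 * p * (1 - p) * J t1 p + p^2 * J t2 p"

lemma E_eq:
  assumes "t0 \<in> Omega" "t1 \<in> Omega" "t2 \<in> Omega"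
  shows "E t0 t1 t2 nu = (LINT p|nu. FF t0 t1 t2 p)"
proof -
  have "(LINT x2|t2. LINT x1|t1. LINT x0|t0. D x0 x1 x2 p) = FF t0 t1 t2 p" for p
  proof -
    have 1: "(LINT x0|t0. D x0 x1 x2 p) = (1-p)^2 * J t0 p + (2 * p * (1 - p) * \<bar>p - x1\<bar> + p^2 * \<bar>p - x2\<bar>)" for x1 x2
      unfolding D_eq using int_lin[OF assms(1)] by (simp add: add.assoc)
    have 2: "(LINT x1|t1. (1-p)^2 * J t0 p + (2 * p * (1 - p) * \<bar>p - x1\<bar> + p^2 * \<bar>p - x2\<bar>))
       = 2 * p * (1 - p) * J t1 p + ((1-p)^2 * J t0 p + p^2 * \<bar>p - x2\<bar>)" for x2
      using int_lin[OF assms(2), of "2 * p * (1 - p)" p "(1-p)^2 * J t0 p + p^2 * \<bar>p - x2\<bar>"]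
      by (simp add: algebra_simps)
    have 3: "(LINT x2|t2. 2 * p * (1 - p) * J t1 p + ((1-p)^2 * J t0 p + p^2 * \<bar>p - x2\<bar>)) = FF t0 t1 t2 p"
      using int_lin[OF assms(3), of "p^2" p "2 * p * (1 - p) * J t1 p + (1-p)^2 * J t0 p"]
      unfolding FF_def by (simp add: algebra_simps)
    show ?thesis unfolding 1 2 3 ..
  qed
  then show ?thesis unfolding E_def by simp
qed

lemma J_dirac: "x \<in> {0..1} \<Longrightarrow> J (dirac x) p = \<bar>p - x\<bar>"
  unfolding J_def by (rule int_dirac) auto

lemma FF_dirac: "x0 \<in> {0..1} \<Longrightarrow> x1 \<in> {0..1} \<Longrightarrow> x2 \<in> {0..1} \<Longrightarrow>
  FF (dirac x0) (dirac x1) (dirac x2) p = D x0 x1 x2 p"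
  unfolding FF_def D_eq by (simp add: J_dirac)

lemma J_lip: "t \<in> Omega \<Longrightarrow> \<bar>J t p - J t p'\<bar> \<le> \<bar>p - p'\<bar>"
proof -
  assume t: "t \<in> Omega"
  interpret prob_space t by (rule Omega_D[OF t])
  have "J t p - J t p' = (LINT x|t. \<bar>p - x\<bar> - \<bar>p' - x\<bar>)" unfolding J_def
    using int_abs[OF t] by (simp add: integral_diff)
  also have "\<bar>\<dots>\<bar> \<le> (LINT x|t. \<bar>\<bar>p - x\<bar> - \<bar>p' - x\<bar>\<bar>)"
    by (rule integral_abs_bound)
  also have "\<dots> \<le> (LINT x|t. \<bar>p - p'\<bar>)"
    by (rule integral_mono) (auto intro!: Omega_int[OF t, where B="\<bar>p\<bar> + \<bar>p'\<bar> + 2"])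
  also have "\<dots> = \<bar>p - p'\<bar>" by (simp add: prob_space)
  finally show ?thesis .
qed

lemma J_meas: "t \<in> Omega \<Longrightarrow> J t \<in> borel_measurable borel"
  apply (rule borel_measurable_continuous_onI)
  apply (rule lipschitz_on_continuous_on[where L=1])
  apply (rule lipschitz_onI)
  using J_lip by (auto simp: dist_real_def)

lemma FF_meas: "t0 \<in> Omega \<Longrightarrow> t1 \<in> Omega \<Longrightarrow> t2 \<in> Omega \<Longrightarrow> FF t0 t1 t2 \<in> borel_measurable borel"
  unfolding FF_def using J_meas by measurable



lemma sum4: "(\<Sum>i\<in>{0..3::nat}. f i) = f 0 + f 1 + f 2 + f 3"
proof -
  have "{0..3::nat} = {0,1,2,3}" by auto
  then show ?thesis by (simp add: add.assoc)
qed

lemma four: "i \<in> {0..3::nat} \<Longrightarrow> i = 0 \<or> i = 1 \<or> i = 2 \<or> i = 3" by auto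

lemma pp_vals: "pp 0 = 0" "pp 1 = p1" "pp 2 = 1 - p1" "pp 3 = 1" "pp (Suc 0) = p1"
  by (simp_all add: pp_def)

lemma mm_vals: "mm 0 = 1/2 - m1" "mm 1 = m1" "mm 2 = m1" "mm 3 = 1/2 - m1" "mm (Suc 0) = m1"
  by (simp_all add: mm_def)

lemma m1_eq: "m1 * (p1^2 + (1 - p1)^2 + 1) = 1/2"
proof -
  have "p1^2 + (1 - p1)^2 + 1 > 0" by (simp add: add_nonneg_pos)
  then show ?thesis unfolding m1_def by simp
qed

lemma m1_bounds: "0 < m1" "m1 < 1/2"
proof -
  have S: "p1^2 + (1 - p1)^2 + 1 > 1" using p1_bounds by (simp add: add_nonneg_pos add_pos_nonneg)
  show "0 < m1" unfolding m1_def using S by simp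
  show "m1 < 1/2" unfolding m1_def using S by (simp add: divide_less_eq)
qed

lemma mm_nonneg: "i \<in> {0..3} \<Longrightarrow> 0 \<le> mm i"
  using m1_bounds four[of i] by (auto simp: mm_vals)

lemma mm_sum: "(\<Sum>i\<in>{0..3::nat}. mm i) = 1"
  by (simp add: sum4 mm_vals)

lemma pp_in: "i \<in> {0..3} \<Longrightarrow> pp i \<in> {0..1}"
  using p1_bounds four[of i] by (auto simp: pp_vals)

lemma pp_distinct: "i \<in> {0..3} \<Longrightarrow> j \<in> {0..3} \<Longrightarrow> pp i = pp j \<Longrightarrow> i = j"
  using p1_bounds four[of i] four[of j] by (auto simp: pp_vals)



lemma SA: "sigma_algebra {0..1} (sets I01)"
  using sets.sigma_algebra_axioms[of I01] by (simp add: space_I01)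

definition muf :: "real set \<Rightarrow> ennreal" where
  "muf A = ennreal (\<Sum>i\<in>{0..3::nat}. mm i * indicator A (pp i))"

lemma muf_alt: "muf A = (\<Sum>i\<in>{0..3::nat}. ennreal (mm i) * indicator A (pp i))"
proof -
  have "muf A = (\<Sum>i\<in>{0..3::nat}. ennreal (mm i * indicator A (pp i)))"
    unfolding muf_def by (rule sum_ennreal[symmetric]) (simp add: mm_nonneg)
  also have "\<dots> = (\<Sum>i\<in>{0..3::nat}. ennreal (mm i) * indicator A (pp i))"
    by (rule sum.cong) (auto simp: ennreal_mult'' ennreal_indicator)
  finally show ?thesis .
qed

lemma muf_ca: "countably_additive (sets I01) muf"
  unfolding countably_additive_def
proof (intro allI impI)
  fix A :: "nat \<Rightarrow> real set" assume d: "disjoint_family A"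
  have "(\<Sum>n. muf (A n)) = (\<Sum>i\<in>{0..3::nat}. \<Sum>n. ennreal (mm i) * indicator (A n) (pp i))"
    unfolding muf_alt by (rule suminf_sum) simp
  also have "\<dots> = (\<Sum>i\<in>{0..3::nat}. ennreal (mm i) * indicator (\<Union>n. A n) (pp i))"
    using suminf_indicator[OF d] by simp
  also have "\<dots> = muf (\<Union>n. A n)" unfolding muf_alt ..
  finally show "(\<Sum>n. muf (A n)) = muf (\<Union>n. A n)" .
qed

lemma mu_emeasure: "A \<in> sets I01 \<Longrightarrow> emeasure mu A = muf A"
  unfolding mu_def muf_def[symmetric]
  by (rule emeasure_measure_of_sigma[OF SA _ muf_ca]) (simp_all add: positive_def muf_def)

lemma mu_sets: "sets mu = sets I01" and mu_space: "space mu = {0..1}"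
  unfolding mu_def using sigma_algebra.sets_measure_of_eq[OF SA] sigma_algebra.space_measure_of_eq[OF SA] by auto

lemma mu_Omega: "mu \<in> Omega"
proof -
  have "{0..1} \<in> sets I01" using sets.top[of I01] by (simp add: space_I01)
  hence "emeasure mu (space mu) = muf {0..1}" using mu_emeasure mu_space by simp
  also have "\<dots> = 1" unfolding muf_def using pp_in
    by (simp add: sum4 mm_vals pp_vals[symmetric] indicator_def del: pp_vals) (simp add: pp_vals p1_bounds less_imp_le)
  finally show ?thesis unfolding Omega_def by (auto intro!: prob_spaceI simp: mu_sets)
qed

lemma sets_I01_iff: "A \<in> sets I01 \<longleftrightarrow> A \<subseteq> {0..1} \<and> A \<in> sets borel"
  unfolding I01_def by (rule sets_restrict_space_iff) simp

lemma ind_pp: "i \<in> {0..3} \<Longrightarrow> j \<in> {0..3} \<Longrightarrow> indicator {pp i} (pp j) = (if i = j then 1 else (0::real))"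
  using pp_distinct[of j i] by (auto simp: indicator_def)

lemma ae_sum:
  fixes g :: "real \<Rightarrow> real"
  assumes M: "M \<in> Omega" and ae: "AE x in M. x \<in> pp ` {0..3}" and g: "g \<in> borel_measurable borel"
  shows "(LINT x|M. g x) = (\<Sum>i\<in>{0..3}. g (pp i) * measure M {pp i})"
proof -
  interpret prob_space M by (rule Omega_D[OF M])
  have "AE x in M. g x = (\<Sum>i\<in>{0..3}. g (pp i) * indicator {pp i} x)"
    using ae
  proof eventually_elim
    case (elim x)
    then obtain j where j: "j \<in> {0..3}" "x = pp j" by auto
    have "(\<Sum>i\<in>{0..3}. g (pp i) * indicator {pp i} x) = (\<Sum>i\<in>{0..3}. if i = j then g (pp i) else 0)"
      using j ind_pp[of _ j] by (intro sum.cong) auto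
    also have "\<dots> = g x" using j by simp
    finally show ?case by simp
  qed
  moreover have m: "(\<lambda>x. \<Sum>i\<in>{0..3}. g (pp i) * indicator {pp i} x) \<in> borel_measurable borel"
    by measurable
  ultimately have "(LINT x|M. g x) = (LINT x|M. (\<Sum>i\<in>{0..3}. g (pp i) * indicator {pp i} x))"
    by (intro integral_cong_AE[OF Omega_meas[OF M g] Omega_meas[OF M m]])
  also have "\<dots> = (\<Sum>i\<in>{0..3}. LINT x|M. g (pp i) * indicator {pp i} x)"
    apply (rule Bochner_Integration.integral_sum[where I="{0..3}" and M=M and f="\<lambda>i x. g (pp i) * indicator {pp i} x"])
    subgoal for i
      apply (rule Omega_int[OF M, where B="\<bar>g (pp i)\<bar>"])
       apply measurable
      apply (auto simp: indicator_def)
      done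
    done
  also have "\<dots> = (\<Sum>i\<in>{0..3}. g (pp i) * measure M {pp i})"
  proof (rule sum.cong)
    fix i :: nat assume i: "i \<in> {0..3}"
    have "pp i \<in> space M" using pp_in[OF i] Omega_D(3)[OF M] by simp
    then show "(LINT x|M. g (pp i) * indicator {pp i} x) = g (pp i) * measure M {pp i}"
      by simp
  qed simp
  finally show ?thesis .
qed

lemma mu_measure_pp: "i \<in> {0..3} \<Longrightarrow> measure mu {pp i} = mm i"
proof -
  assume i: "i \<in> {0..3}"
  have "{pp i} \<in> sets I01" using pp_in[OF i] by (simp add: sets_I01_iff)
  then have "emeasure mu {pp i} = ennreal (\<Sum>j\<in>{0..3}. mm j * indicator {pp i} (pp j))"
    using mu_emeasure muf_def by simp
  also have "(\<Sum>j\<in>{0..3}. mm j * indicator {pp i} (pp j)) = (\<Sum>j\<in>{0..3}. if i = j then mm j else 0)"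
    using ind_pp[OF i] by (intro sum.cong) auto
  also have "\<dots> = mm i" using i by simp
  finally show ?thesis unfolding measure_def using mm_nonneg[OF i] by simp
qed

lemma mu_ae: "AE x in mu. x \<in> pp ` {0..3}"
proof (rule AE_I')
  let ?N = "{0..1} - pp ` {0..3}"
  have f: "pp ` {0..3} \<in> sets borel" by (rule borel_closed) (simp add: finite_imp_closed)
  have N: "?N \<in> sets I01" unfolding sets_I01_iff using f by auto
  have "emeasure mu ?N = ennreal (\<Sum>j\<in>{0..3}. mm j * indicator ?N (pp j))"
    using mu_emeasure[OF N] muf_def by simp
  also have "(\<Sum>j\<in>{0..3::nat}. mm j * indicator ?N (pp j)) = 0"
    by (intro sum.neutral) auto
  finally show "?N \<in> null_sets mu" using N by (intro null_setsI) (simp_all add: mu_sets)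
  show "{x \<in> space mu. x \<notin> pp ` {0..3}} \<subseteq> ?N" by (auto simp: mu_space)
qed



lemma E_mu: "t0 \<in> Omega \<Longrightarrow> t1 \<in> Omega \<Longrightarrow> t2 \<in> Omega \<Longrightarrow>
  E t0 t1 t2 mu = (\<Sum>i\<in>{0..3}. FF t0 t1 t2 (pp i) * mm i)"
  unfolding E_eq by (simp add: ae_sum[OF mu_Omega mu_ae FF_meas] mu_measure_pp)

definition Pp :: "real measure \<Rightarrow> real \<Rightarrow> real" where "Pp t p = (LINT x|t. max (x - p) 0)"
definition Pm :: "real measure \<Rightarrow> real \<Rightarrow> real" where "Pm t p = (LINT x|t. max (p - x) 0)"

lemma int_Pp: "t \<in> Omega \<Longrightarrow> integrable t (\<lambda>x. max (x - p) 0)"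
  by (rule Omega_int[where B="\<bar>p\<bar> + 1"]) auto
lemma int_Pm: "t \<in> Omega \<Longrightarrow> integrable t (\<lambda>x. max (p - x) 0)"
  by (rule Omega_int[where B="\<bar>p\<bar> + 1"]) auto

lemma Pp_nonneg: "0 \<le> Pp t p" unfolding Pp_def by (rule Bochner_Integration.integral_nonneg) auto
lemma Pm_nonneg: "0 \<le> Pm t p" unfolding Pm_def by (rule Bochner_Integration.integral_nonneg) auto

lemma J_Pp: assumes t: "t \<in> Omega" shows "J t p = p - mean t + 2 * Pp t p"
proof -
  interpret prob_space t by (rule Omega_D[OF t])
  have "J t p = (LINT x|t. (p - x) + 2 * max (x - p) 0)" unfolding J_def
    by (rule Bochner_Integration.integral_cong) (auto simp: max_def)
  also have "\<dots> = (LINT x|t. p - x) + 2 * Pp t p" unfolding Pp_def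
    using int_Pp[OF t] int_id[OF t] by (simp add: integral_add)
  also have "(LINT x|t. p - x) = p - mean t" unfolding mean_def
    using int_id[OF t] by (simp add: integral_diff prob_space)
  finally show ?thesis .
qed

lemma J_Pm: assumes t: "t \<in> Omega" shows "J t p = mean t - p + 2 * Pm t p"
proof -
  interpret prob_space t by (rule Omega_D[OF t])
  have "J t p = (LINT x|t. (x - p) + 2 * max (p - x) 0)" unfolding J_def
    by (rule Bochner_Integration.integral_cong) (auto simp: max_def)
  also have "\<dots> = (LINT x|t. x - p) + 2 * Pm t p" unfolding Pm_def
    using int_Pm[OF t] int_id[OF t] by (simp add: integral_add)
  also have "(LINT x|t. x - p) = mean t - p" unfolding mean_def
    using int_id[OF t] by (simp add: integral_diff prob_space)
  finally show ?thesis .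
qed

lemma J_0: assumes t: "t \<in> Omega" shows "J t 0 = mean t"
  unfolding J_def mean_def by (rule Bochner_Integration.integral_cong) (auto simp: Omega_D(3)[OF t])

lemma J_1: assumes t: "t \<in> Omega" shows "J t 1 = 1 - mean t"
proof -
  interpret prob_space t by (rule Omega_D[OF t])
  have "J t 1 = (LINT x|t. 1 - x)" unfolding J_def
    by (rule Bochner_Integration.integral_cong) (auto simp: Omega_D(3)[OF t])
  also have "\<dots> = 1 - mean t" unfolding mean_def
    using int_id[OF t] by (simp add: integral_diff prob_space)
  finally show ?thesis .
qed

lemma a0_m1: "a0 = 4 * m1 * p1 * (1 - p1)^2"
proof -
  have "p1^2 + (1 - p1)^2 + 1 > 0" by (simp add: add_nonneg_pos)
  then show ?thesis unfolding a0_def m1_def by (simp add: field_simps)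
qed

lemma m0_m1: "1/2 - m1 = m1 * (p1^2 + (1 - p1)^2)"
  using m1_eq by (simp add: algebra_simps)

lemma E_mu_formula:
  assumes "t0 \<in> Omega" "t1 \<in> Omega" "t2 \<in> Omega"
  shows "E t0 t1 t2 mu = a0 + 2 * m1 * ((1-p1)^2 * Pp t0 p1 + 2 * p1 * (1-p1) * Pm t1 p1 + p1^2 * Pm t2 p1
     + p1^2 * Pp t0 (1-p1) + 2 * p1 * (1-p1) * Pp t1 (1-p1) + (1-p1)^2 * Pm t2 (1-p1))"
proof -
  have "E t0 t1 t2 mu = (1/2 - m1) * mean t0 + m1 * FF t0 t1 t2 p1 + m1 * FF t0 t1 t2 (1 - p1) + (1/2 - m1) * (1 - mean t2)"
    unfolding E_mu[OF assms] sum4 pp_vals mm_vals FF_def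
    by (simp add: algebra_simps J_0[OF assms(1)] J_1[OF assms(3)])
  also have "\<dots> = a0 + 2 * m1 * ((1-p1)^2 * Pp t0 p1 + 2 * p1 * (1-p1) * Pm t1 p1 + p1^2 * Pm t2 p1
     + p1^2 * Pp t0 (1-p1) + 2 * p1 * (1-p1) * Pp t1 (1-p1) + (1-p1)^2 * Pm t2 (1-p1))"
    unfolding m0_m1 a0_m1 FF_def J_Pp[OF assms(1)] J_Pm[OF assms(2), of p1] J_Pp[OF assms(2), of "1 - p1"] J_Pm[OF assms(3)]
    by (simp add: algebra_simps power2_eq_square)
  finally show ?thesis .
qed



lemma a_in: "a0 \<in> {0..1}" "1/2 \<in> {0..(1::real)}" "1 - a0 \<in> {0..1}"
  using a0_bounds p1_bounds by auto

lemma D_meas: "(\<lambda>p. D x0 x1 x2 p) \<in> borel_measurable borel"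
  unfolding D_eq by measurable

lemma E_diracs: "x0 \<in> {0..1} \<Longrightarrow> x1 \<in> {0..1} \<Longrightarrow> x2 \<in> {0..1} \<Longrightarrow>
  E (dirac x0) (dirac x1) (dirac x2) nu = (LINT p|nu. D x0 x1 x2 p)"
  by (simp add: E_eq dirac_Omega FF_dirac)

lemma E_a_nu: assumes nu: "nu \<in> Omega" shows "E (dirac a0) (dirac (1/2)) (dirac (1 - a0)) nu \<le> a0"
proof -
  interpret prob_space nu by (rule Omega_D[OF nu])
  have "E (dirac a0) (dirac (1/2)) (dirac (1 - a0)) nu = (LINT p|nu. D a0 (1/2) (1 - a0) p)"
    using a_in by (rule E_diracs)
  also have "\<dots> \<le> (LINT p|nu. a0)"
  proof (rule integral_mono)
    show "integrable nu (\<lambda>p. D a0 (1/2) (1 - a0) p)"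
    proof (rule Omega_int[OF nu D_meas, where B=a0])
      fix p :: real assume p: "p \<in> {0..1}"
      have "0 \<le> D a0 (1/2) (1 - a0) p" using p unfolding D_eq
        by (auto intro!: add_nonneg_nonneg mult_nonneg_nonneg)
      then show "\<bar>D a0 (1/2) (1 - a0) p\<bar> \<le> a0" using fa_le[of p] p by (simp add: fa_def)
    qed
    show "integrable nu (\<lambda>p. a0)" by simp
    fix p assume "p \<in> space nu"
    then show "D a0 (1/2) (1 - a0) p \<le> a0" using fa_le[of p] Omega_D(3)[OF nu] by (simp add: fa_def)
  qed
  also have "\<dots> = a0" by (simp add: prob_space)
  finally show ?thesis .
qed

lemma fa_pp: "i \<in> {0..3} \<Longrightarrow> D a0 (1/2) (1 - a0) (pp i) = a0"
  using fa_eq[of "pp i"] pp_in[of i] four[of i] by (auto simp: fa_def pp_vals)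

lemma E_a_mu: "E (dirac a0) (dirac (1/2)) (dirac (1 - a0)) mu = a0"
proof -
  have "E (dirac a0) (dirac (1/2)) (dirac (1 - a0)) mu = (\<Sum>i\<in>{0..3}. D a0 (1/2) (1 - a0) (pp i) * mm i)"
    using a_in by (simp add: E_mu dirac_Omega FF_dirac)
  also have "\<dots> = (\<Sum>i\<in>{0..3}. a0 * mm i)" by (rule sum.cong) (simp_all add: fa_pp)
  also have "\<dots> = a0" by (simp add: sum_distrib_left[symmetric] mm_sum)
  finally show ?thesis .
qed

lemma E_mu_ge: "t0 \<in> Omega \<Longrightarrow> t1 \<in> Omega \<Longrightarrow> t2 \<in> Omega \<Longrightarrow> a0 \<le> E t0 t1 t2 mu"
  unfolding E_mu_formula using m1_bounds p1_bounds
  by (auto intro!: add_nonneg_nonneg mult_nonneg_nonneg Pp_nonneg Pm_nonneg)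

lemma E_s_dirac: "s0 \<in> Omega \<Longrightarrow> s1 \<in> Omega \<Longrightarrow> s2 \<in> Omega \<Longrightarrow> p \<in> {0..1} \<Longrightarrow>
  E s0 s1 s2 (dirac p) = FF s0 s1 s2 p"
  by (simp add: E_eq int_dirac FF_meas)

lemma part2: "saddle (dirac a0) (dirac (1/2)) (dirac (1 - a0)) mu"
  unfolding saddle_def using E_a_nu E_a_mu E_mu_ge by simp



lemma W_expand: "(\<Sum>i\<in>{0..3}. D x0 x1 x2 (pp i) * w i) =
   w 0 * \<bar>x0\<bar>
 + w 1 * ((1-p1)^2 * \<bar>p1 - x0\<bar> + 2 * p1 * (1-p1) * \<bar>p1 - x1\<bar> + p1^2 * \<bar>p1 - x2\<bar>)
 + w 2 * (p1^2 * \<bar>1 - p1 - x0\<bar> + 2 * p1 * (1-p1) * \<bar>1 - p1 - x1\<bar> + (1-p1)^2 * \<bar>1 - p1 - x2\<bar>)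
 + w 3 * \<bar>1 - x2\<bar>"
  by (simp add: sum4 pp_vals D_eq algebra_simps)

lemma signs: "0 < a0" "a0 < p1" "p1 < 1/2" using a0_bounds p1_bounds by auto

lemma Wa: "(\<Sum>i\<in>{0..3}. D a0 (1/2) (1-a0) (pp i) * w i) =
   w 0 * a0
 + w 1 * ((1-p1)^2 * (p1 - a0) + 2 * p1 * (1-p1) * (1/2 - p1) + p1^2 * (1 - a0 - p1))
 + w 2 * (p1^2 * (1 - p1 - a0) + 2 * p1 * (1-p1) * (1/2 - p1) + (1-p1)^2 * (p1 - a0))
 + w 3 * a0"
  unfolding W_expand using signs by (simp add: abs_if)

lemma W0: "(\<Sum>i\<in>{0..3}. D 0 (1/2) (1-a0) (pp i) * w i) =
   w 1 * ((1-p1)^2 * p1 + 2 * p1 * (1-p1) * (1/2 - p1) + p1^2 * (1 - a0 - p1))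
 + w 2 * (p1^2 * (1 - p1) + 2 * p1 * (1-p1) * (1/2 - p1) + (1-p1)^2 * (p1 - a0))
 + w 3 * a0"
  unfolding W_expand using signs by (simp add: abs_if)

lemma Wq: "(\<Sum>i\<in>{0..3}. D p1 (1/2) (1-a0) (pp i) * w i) =
   w 0 * p1
 + w 1 * (2 * p1 * (1-p1) * (1/2 - p1) + p1^2 * (1 - a0 - p1))
 + w 2 * (p1^2 * (1 - 2 * p1) + 2 * p1 * (1-p1) * (1/2 - p1) + (1-p1)^2 * (p1 - a0))
 + w 3 * a0"
  unfolding W_expand using signs by (simp add: abs_if)

lemma Wx1q: "(\<Sum>i\<in>{0..3}. D a0 p1 (1-a0) (pp i) * w i) =
   w 0 * a0
 + w 1 * ((1-p1)^2 * (p1 - a0) + p1^2 * (1 - a0 - p1))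
 + w 2 * (p1^2 * (1 - p1 - a0) + 2 * p1 * (1-p1) * (1 - 2 * p1) + (1-p1)^2 * (p1 - a0))
 + w 3 * a0"
  unfolding W_expand using signs by (simp add: abs_if)

lemma Wx1q': "(\<Sum>i\<in>{0..3}. D a0 (1 - p1) (1-a0) (pp i) * w i) =
   w 0 * a0
 + w 1 * ((1-p1)^2 * (p1 - a0) + 2 * p1 * (1-p1) * (1 - 2 * p1) + p1^2 * (1 - a0 - p1))
 + w 2 * (p1^2 * (1 - p1 - a0) + (1-p1)^2 * (p1 - a0))
 + w 3 * a0"
  unfolding W_expand using signs by (simp add: abs_if)

lemma Wx21: "(\<Sum>i\<in>{0..3}. D a0 (1/2) 1 (pp i) * w i) =
   w 0 * a0
 + w 1 * ((1-p1)^2 * (p1 - a0) + 2 * p1 * (1-p1) * (1/2 - p1) + p1^2 * (1 - p1))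
 + w 2 * (p1^2 * (1 - p1 - a0) + 2 * p1 * (1-p1) * (1/2 - p1) + (1-p1)^2 * p1)"
  unfolding W_expand using signs by (simp add: abs_if)

lemma Wx2q: "(\<Sum>i\<in>{0..3}. D a0 (1/2) (1 - p1) (pp i) * w i) =
   w 0 * a0
 + w 1 * ((1-p1)^2 * (p1 - a0) + 2 * p1 * (1-p1) * (1/2 - p1) + p1^2 * (1 - 2 * p1))
 + w 2 * (p1^2 * (1 - p1 - a0) + 2 * p1 * (1-p1) * (1/2 - p1))
 + w 3 * p1"
  unfolding W_expand using signs by (simp add: abs_if)

lemma weights:
  fixes w :: "nat \<Rightarrow> real"
  assumes ge: "\<And>x0 x1 x2. x0 \<in> {0..1} \<Longrightarrow> x1 \<in> {0..1} \<Longrightarrow> x2 \<in> {0..1} \<Longrightarrow>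
     (\<Sum>i\<in>{0..3}. D a0 (1/2) (1-a0) (pp i) * w i) \<le> (\<Sum>i\<in>{0..3}. D x0 x1 x2 (pp i) * w i)"
    and tot: "w 0 + w 1 + w 2 + w 3 = 1"
  shows "w 0 = 1/2 - m1" "w 1 = m1" "w 2 = m1" "w 3 = 1/2 - m1"
proof -
  note sg = signs
  have i01: "0 \<in> {0..1::real}" "1 \<in> {0..1::real}" "p1 \<in> {0..1}" "1 - p1 \<in> {0..1}"
    using sg by auto
  note A = a_in
  have "a0 * ((1-p1)^2 * w 1 + p1^2 * w 2 - w 0) \<ge> 0"
    using ge[OF i01(1) A(2) A(3)] unfolding Wa W0 by (simp add: algebra_simps power2_eq_square)
  hence e1: "(1-p1)^2 * w 1 + p1^2 * w 2 - w 0 \<ge> 0" using sg by (simp add: zero_le_mult_iff)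
  have "(p1 - a0) * (w 0 - (1-p1)^2 * w 1 - p1^2 * w 2) \<ge> 0"
    using ge[OF i01(3) A(2) A(3)] unfolding Wa Wq by (simp add: algebra_simps power2_eq_square)
  hence e2: "w 0 - (1-p1)^2 * w 1 - p1^2 * w 2 \<ge> 0" using sg by (simp add: zero_le_mult_iff)
  have "(2 * p1 * (1 - p1) * (1/2 - p1)) * (w 2 - w 1) \<ge> 0"
    using ge[OF A(1) i01(3) A(3)] unfolding Wa Wx1q by (simp add: algebra_simps power2_eq_square)
  moreover have "2 * p1 * (1 - p1) * (1/2 - p1) > 0" using sg by simp
  ultimately have e3: "w 2 - w 1 \<ge> 0" by (simp add: zero_le_mult_iff)
  have "(2 * p1 * (1 - p1) * (1/2 - p1)) * (w 1 - w 2) \<ge> 0"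
    using ge[OF A(1) i01(4) A(3)] unfolding Wa Wx1q' by (simp add: algebra_simps power2_eq_square)
  hence e4: "w 1 - w 2 \<ge> 0" using \<open>2 * p1 * (1 - p1) * (1/2 - p1) > 0\<close> by (simp add: zero_le_mult_iff)
  have "a0 * ((1-p1)^2 * w 2 + p1^2 * w 1 - w 3) \<ge> 0"
    using ge[OF A(1) A(2) i01(2)] unfolding Wa Wx21 by (simp add: algebra_simps power2_eq_square)
  hence e5: "(1-p1)^2 * w 2 + p1^2 * w 1 - w 3 \<ge> 0" using sg by (simp add: zero_le_mult_iff)
  have "(p1 - a0) * (w 3 - (1-p1)^2 * w 2 - p1^2 * w 1) \<ge> 0"
    using ge[OF A(1) A(2) i01(4)] unfolding Wa Wx2q by (simp add: algebra_simps power2_eq_square)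
  hence e6: "w 3 - (1-p1)^2 * w 2 - p1^2 * w 1 \<ge> 0" using sg by (simp add: zero_le_mult_iff)
  have w12: "w 2 = w 1" using e3 e4 by simp
  have w0: "w 0 = w 1 * (p1^2 + (1-p1)^2)" using e1 e2 w12 by (simp add: algebra_simps)
  have w3: "w 3 = w 1 * (p1^2 + (1-p1)^2)" using e5 e6 w12 by (simp add: algebra_simps)
  have "w 1 * (2 * (p1^2 + (1-p1)^2 + 1)) = 1" using tot w12 w0 w3 by (simp add: algebra_simps)
  moreover have "m1 * (2 * (p1^2 + (1-p1)^2 + 1)) = 1" using m1_eq by (simp add: algebra_simps)
  moreover have "2 * (p1^2 + (1-p1)^2 + 1) \<noteq> 0"
  proof -
    have "p1^2 + (1-p1)^2 + 1 > 0" by (simp add: add_nonneg_pos)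
    then have "0 < 2 * (p1^2 + (1-p1)^2 + 1)" by simp
    then show ?thesis by (metis less_irrefl)
  qed
  ultimately have w1: "w 1 = m1" by (metis mult_right_cancel)
  show "w 1 = m1" by (rule w1)
  show "w 2 = m1" using w12 w1 by simp
  show "w 0 = 1/2 - m1" using w0 w1 m0_m1 by simp
  show "w 3 = 1/2 - m1" using w3 w1 m0_m1 by simp
qed



lemma D_bound: "p \<in> {0..1} \<Longrightarrow> x0 \<in> {0..1} \<Longrightarrow> x1 \<in> {0..1} \<Longrightarrow> x2 \<in> {0..1} \<Longrightarrow>
  \<bar>D x0 x1 x2 p\<bar> \<le> 1"
proof -
  assume p: "p \<in> {0..1}" and x: "x0 \<in> {0..1}" "x1 \<in> {0..1}" "x2 \<in> {0..1}"
  have c: "0 \<le> (1-p)^2" "0 \<le> 2 * p * (1-p)" "0 \<le> p^2" using p by auto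
  have b: "\<bar>p - x0\<bar> \<le> 1" "\<bar>p - x1\<bar> \<le> 1" "\<bar>p - x2\<bar> \<le> 1" using p x by auto
  have "(1-p)^2 * \<bar>p - x0\<bar> \<le> (1-p)^2" using mult_left_mono[OF b(1) c(1)] by simp
  moreover have "2 * p * (1-p) * \<bar>p - x1\<bar> \<le> 2 * p * (1-p)" using mult_left_mono[OF b(2) c(2)] by simp
  moreover have "p^2 * \<bar>p - x2\<bar> \<le> p^2" using mult_left_mono[OF b(3) c(3)] by simp
  moreover have "(1-p)^2 + 2 * p * (1-p) + p^2 = 1" by (simp add: algebra_simps power2_eq_square)
  moreover have "0 \<le> D x0 x1 x2 p" unfolding D_eq using c by (auto intro!: add_nonneg_nonneg mult_nonneg_nonneg)
  ultimately show ?thesis unfolding D_eq by simp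
qed

lemma pp_image: "pp ` {0..3} = {0, p1, 1 - p1, 1}"
proof -
  have "{0..3::nat} = {0,1,2,3}" by auto
  then show ?thesis by (simp add: pp_vals)
qed

lemma measure_via:
  assumes M: "M \<in> Omega" and ae: "AE x in M. x \<in> pp ` {0..3}" and A: "A \<in> sets I01"
  shows "emeasure M A = ennreal (\<Sum>i\<in>{0..3}. indicator A (pp i) * measure M {pp i})"
proof -
  interpret prob_space M by (rule Omega_D[OF M])
  have Ab: "A \<in> sets borel" using A by (simp add: sets_I01_iff)
  have "emeasure M A = ennreal (measure M A)" by (simp add: emeasure_eq_measure)
  also have "measure M A = (LINT x|M. indicator A x)"
    using A Omega_D(2)[OF M] by (simp add: Int_absorb2 sets.sets_into_space)
  also have "\<dots> = (\<Sum>i\<in>{0..3}. indicator A (pp i) * measure M {pp i})"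
    by (rule ae_sum[OF M ae borel_measurable_indicator[OF Ab]])
  finally show ?thesis .
qed

lemma uniq:
  assumes s0: "s0 \<in> Omega" and s1: "s1 \<in> Omega" and s2: "s2 \<in> Omega" and nu: "nu \<in> Omega"
    and sd: "saddle s0 s1 s2 nu"
  shows "mean s0 = a0 \<and> mean s1 = 1/2 \<and> mean s2 = 1 - a0 \<and> nu = mu"
proof -
  note S = s0 s1 s2
  have S1: "\<And>nu'. nu' \<in> Omega \<Longrightarrow> E s0 s1 s2 nu' \<le> E s0 s1 s2 nu"
    and S2: "\<And>t0 t1 t2. t0 \<in> Omega \<Longrightarrow> t1 \<in> Omega \<Longrightarrow> t2 \<in> Omega \<Longrightarrow> E s0 s1 s2 nu \<le> E t0 t1 t2 nu"
    using sd unfolding saddle_def by auto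
  have h1: "E s0 s1 s2 mu \<le> E s0 s1 s2 nu" by (rule S1[OF mu_Omega])
  have h2: "E s0 s1 s2 nu \<le> E (dirac a0) (dirac (1/2)) (dirac (1 - a0)) nu"
    using a_in by (intro S2 dirac_Omega)
  have h3: "E (dirac a0) (dirac (1/2)) (dirac (1 - a0)) nu \<le> a0" by (rule E_a_nu[OF nu])
  have h4: "a0 \<le> E s0 s1 s2 mu" by (rule E_mu_ge[OF S])
  have v: "E s0 s1 s2 nu = a0" and Esmu: "E s0 s1 s2 mu = a0"
    and Eanu: "E (dirac a0) (dirac (1/2)) (dirac (1 - a0)) nu = a0"
    using h1 h2 h3 h4 by linarith+
  let ?c = "2 * p1 * (1 - p1)"
  have pos: "0 < (1-p1)^2" "0 < p1^2" "0 < ?c" "0 < m1" using p1_bounds m1_bounds by auto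
  define T1 where "T1 = (1-p1)^2 * Pp s0 p1"
  define T2 where "T2 = ?c * Pm s1 p1"
  define T3 where "T3 = p1^2 * Pm s2 p1"
  define T4 where "T4 = p1^2 * Pp s0 (1-p1)"
  define T5 where "T5 = ?c * Pp s1 (1-p1)"
  define T6 where "T6 = (1-p1)^2 * Pm s2 (1-p1)"
  have Tn: "0 \<le> T1" "0 \<le> T2" "0 \<le> T3" "0 \<le> T4" "0 \<le> T5" "0 \<le> T6"
    unfolding T1_def T2_def T3_def T4_def T5_def T6_def using pos p1_bounds
    by (auto intro!: mult_nonneg_nonneg Pp_nonneg Pm_nonneg)
  have "2 * m1 * (T1 + T2 + T3 + T4 + T5 + T6) = 0"
    using Esmu unfolding E_mu_formula[OF S] T1_def T2_def T3_def T4_def T5_def T6_def by simp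
  hence "T1 + T2 + T3 + T4 + T5 + T6 = 0" using pos by simp
  hence "T1 = 0" "T2 = 0" "T3 = 0" "T4 = 0" "T5 = 0" "T6 = 0" using Tn by linarith+
  hence P0: "Pp s0 p1 = 0" "Pm s1 p1 = 0" "Pm s2 p1 = 0" "Pp s0 (1-p1) = 0" "Pp s1 (1-p1) = 0" "Pm s2 (1-p1) = 0"
    unfolding T1_def T2_def T3_def T4_def T5_def T6_def using pos by auto
  define F0 where "F0 = FF s0 s1 s2 0"
  define F1 where "F1 = FF s0 s1 s2 p1"
  define F2 where "F2 = FF s0 s1 s2 (1 - p1)"
  define F3 where "F3 = FF s0 s1 s2 1"
  have Fle: "F0 \<le> a0" "F1 \<le> a0" "F2 \<le> a0" "F3 \<le> a0"
    unfolding F0_def F1_def F2_def F3_def using p1_bounds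
    by (auto simp flip: v simp: E_s_dirac[OF S, symmetric] intro!: S1 dirac_Omega)
  have Fsum: "(1/2 - m1) * F0 + m1 * F1 + m1 * F2 + (1/2 - m1) * F3 = a0"
    using Esmu unfolding E_mu[OF S] sum4 pp_vals mm_vals F0_def F1_def F2_def F3_def by (simp add: algebra_simps)
  have m0pos: "0 < 1/2 - m1" using m1_bounds by simp
  have "(1/2 - m1) * (a0 - F0) + m1 * (a0 - F1) + m1 * (a0 - F2) + (1/2 - m1) * (a0 - F3)
     = a0 * ((1/2 - m1) + m1 + m1 + (1/2 - m1)) - ((1/2 - m1) * F0 + m1 * F1 + m1 * F2 + (1/2 - m1) * F3)"
    by (simp add: field_simps)
  also have "\<dots> = 0" unfolding Fsum by simp
  finally have "(1/2 - m1) * (a0 - F0) + m1 * (a0 - F1) + m1 * (a0 - F2) + (1/2 - m1) * (a0 - F3) = 0" .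
  moreover have "0 \<le> (1/2 - m1) * (a0 - F0)" "0 \<le> m1 * (a0 - F1)" "0 \<le> m1 * (a0 - F2)" "0 \<le> (1/2 - m1) * (a0 - F3)"
    using Fle m0pos pos by auto
  ultimately have "(1/2 - m1) * (a0 - F0) = 0" "m1 * (a0 - F1) = 0" "(1/2 - m1) * (a0 - F3) = 0"
    by linarith+
  hence Feq: "F0 = a0" "F1 = a0" "F3 = a0" using m0pos pos by auto
  have mu0: "mean s0 = a0" using Feq(1) unfolding F0_def FF_def by (simp add: J_0[OF s0])
  have mu2: "mean s2 = 1 - a0" using Feq(3) unfolding F3_def FF_def by (simp add: J_1[OF s2])
  have "F1 = (1-p1)^2 * (p1 - mean s0) + ?c * (mean s1 - p1) + p1^2 * (mean s2 - p1)"
    unfolding F1_def FF_def J_Pp[OF s0] J_Pm[OF s1] J_Pm[OF s2] P0 by simp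
  hence e1: "(1-p1)^2 * (p1 - a0) + ?c * (mean s1 - p1) + p1^2 * (1 - a0 - p1) = a0"
    using Feq(2) mu0 mu2 by simp
  have "D a0 (1/2) (1 - a0) p1 = a0" using fa_pp[of 1] by (simp add: pp_vals)
  hence e2: "(1-p1)^2 * (p1 - a0) + ?c * (1/2 - p1) + p1^2 * (1 - a0 - p1) = a0"
    unfolding D_eq using signs by (simp add: abs_if)
  have "?c * (mean s1 - 1/2) = 0" using e1 e2 by (simp add: algebra_simps)
  hence mu1: "mean s1 = 1/2" using pos by simp
  interpret N: prob_space nu by (rule Omega_D[OF nu])
  have intD: "integrable nu (\<lambda>p. D a0 (1/2) (1 - a0) p)"
    by (rule Omega_int[OF nu D_meas, where B=1]) (use D_bound a_in in auto)
  have "(LINT p|nu. a0 - D a0 (1/2) (1 - a0) p) = a0 - (LINT p|nu. D a0 (1/2) (1 - a0) p)"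
    using intD by (simp add: integral_diff N.prob_space)
  also have "\<dots> = 0" using Eanu E_diracs[OF a_in] by simp
  finally have "(LINT p|nu. a0 - D a0 (1/2) (1 - a0) p) = 0" .
  moreover have "AE p in nu. 0 \<le> a0 - D a0 (1/2) (1 - a0) p"
    using fa_le Omega_D(3)[OF nu] by (intro AE_I2) (simp add: fa_def)
  ultimately have ae1: "AE p in nu. a0 - D a0 (1/2) (1 - a0) p = 0"
    using integral_nonneg_eq_0_iff_AE[of nu "\<lambda>p. a0 - D a0 (1/2) (1 - a0) p"] intD by simp
  have ae: "AE p in nu. p \<in> pp ` {0..3}"
    using ae1 AE_space
  proof eventually_elim
    case (elim p)
    then have "p \<in> {0..1}" "fa p = a0" using Omega_D(3)[OF nu] by (auto simp: fa_def)
    then have "p = 0 \<or> p = p1 \<or> p = 1 - p1 \<or> p = 1" using fa_eq by auto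
    then show ?case unfolding pp_image by auto
  qed
  define w where "w i = measure nu {pp i}" for i
  have Ew: "E (dirac x0) (dirac x1) (dirac x2) nu = (\<Sum>i\<in>{0..3}. D x0 x1 x2 (pp i) * w i)"
    if "x0 \<in> {0..1}" "x1 \<in> {0..1}" "x2 \<in> {0..1}" for x0 x1 x2
    unfolding E_diracs[OF that] w_def by (rule ae_sum[OF nu ae D_meas])
  have ge: "(\<Sum>i\<in>{0..3}. D a0 (1/2) (1-a0) (pp i) * w i) \<le> (\<Sum>i\<in>{0..3}. D x0 x1 x2 (pp i) * w i)"
    if "x0 \<in> {0..1}" "x1 \<in> {0..1}" "x2 \<in> {0..1}" for x0 x1 x2
    using S2[OF dirac_Omega[OF that(1)] dirac_Omega[OF that(2)] dirac_Omega[OF that(3)]]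
      v Eanu Ew[OF that] Ew[OF a_in] by simp
  have "(LINT p|nu. (1::real)) = (\<Sum>i\<in>{0..3}. 1 * w i)"
    unfolding w_def by (rule ae_sum[OF nu ae]) simp
  hence tot: "w 0 + w 1 + w 2 + w 3 = 1" by (simp add: sum4 N.prob_space)
  note W = weights[OF ge tot]
  have wm: "w i = mm i" if "i \<in> {0..3}" for i
    using four[OF that] W by (auto simp: mm_vals)
  have "nu = mu"
  proof (rule measure_eqI)
    show "sets nu = sets mu" using Omega_D(2)[OF nu] mu_sets by simp
    fix A assume "A \<in> sets nu"
    hence A: "A \<in> sets I01" using Omega_D(2)[OF nu] by simp
    show "emeasure nu A = emeasure mu A"
      unfolding measure_via[OF nu ae A] measure_via[OF mu_Omega mu_ae A]
      using wm mu_measure_pp by (simp add: w_def)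
  qed
  then show ?thesis using mu0 mu1 mu2 by simp
qed


theorem theorem5p1:
  shows "mu \<in> Omega
    \<and> saddle (dirac a0) (dirac (1/2)) (dirac (1 - a0)) mu
    \<and> (\<forall>s0\<in>Omega. \<forall>s1\<in>Omega. \<forall>s2\<in>Omega. \<forall>nu\<in>Omega.
         saddle s0 s1 s2 nu \<longrightarrow>
           (LINT x|s0. x) = a0 \<and> (LINT x|s1. x) = 1/2 \<and> (LINT x|s2. x) = 1 - a0 \<and> nu = mu)"
proof -
  have "\<forall>s0\<in>Omega. \<forall>s1\<in>Omega. \<forall>s2\<in>Omega. \<forall>nu\<in>Omega.
         saddle s0 s1 s2 nu \<longrightarrow>
           (LINT x|s0. x) = a0 \<and> (LINT x|s1. x) = 1/2 \<and> (LINT x|s2. x) = 1 - a0 \<and> nu = mu"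
    using uniq unfolding mean_def by blast
  then show ?thesis using mu_Omega part2 by blast
qed

end
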